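(* Let $\mathbf{a}=a_1a_2\cdots a_k\in\mathbb{N}^k$. Then $\hat{A}_{\mathbf{a}}$ and $A_{\mathbf{a}}$ are primitive and have the same Perron–Frobenius eigenvalue $E_{\mathbf{a}}$. Moreover, $q_{kn}(\alpha)\sim E_{\mathbf{a}}^n$ for all $\alpha\in\mathcal{P}(\mathbf{a})$.
   Context: For $n\in\mathbb{N}$ let the alphabet be $\mathscr{A}_n=\{(\mathbf{1},i)_n:1\le i\le n+1\}\cup\{(\mathbf{2},1)_n\}\cup\{(\mathbf{3},i)_n:1\le i\le n\}$; for $e=(\mathbf{t},i)_n$ its type is $\mathbf{t}(e)=\mathbf{t}$. For $\mathbf{t}\in\{\mathbf{1},\mathbf{2},\mathbf{3}\}$ and $\hat e\in\mathscr{A}_m$, write $\mathbf{t}\to\hat e$ iff $(\mathbf{t},\hat e)$ is one of: $(\mathbf{1},(\mathbf{2},1)_m)$; $(\mathbf{2},(\mathbf{1},i)_m)$ with $1\le i\le m+1$; $(\mathbf{2},(\mathbf{3},i)_m)$ with $1\le i\le m$; $(\mathbf{3},(\mathbf{1},i)_m)$ with $1\le i\le m$; $(\mathbf{3},(\mathbf{3},i)_m)$ with $1\le i\le m-1$. For $e\in\mathscr{A}_n,\hat e\in\mathscr{A}_m$, write $e\to\hat e$ iff $\mathbf{t}(e)\to\hat e$. For $\mathbf{a}=a_1\cdots a_k$, let $\mathcal{A}_{\mathbf{a}}=\{e_1\cdots e_k: e_i\in\mathscr{A}_{a_i},\ e_i\to e_{i+1},\ 1\le i<k\}$; for $\mathbf{v}=e_1\cdots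 e_k\in\mathcal{A}_{\mathbf{a}}$ its header is $h_{\mathbf{v}}=e_1$ and its tail type is $\mathbf{t}(\mathbf{v})=\mathbf{t}(e_k)$. The incidence matrix $A_{\mathbf{a}}=(a_{\mathbf{v}\mathbf{w}})_{\mathbf{v},\mathbf{w}\in\mathcal{A}_{\mathbf{a}}}$ has $a_{\mathbf{v}\mathbf{w}}=1$ if $\mathbf{t}(\mathbf{v})\to h_{\mathbf{w}}$ and $0$ otherwise. For $m\in\mathbb{N}$ let $\hat A_m=\begin{pmatrix}0&1&0\\ m+1&0&m\\ m&0&m-1\end{pmatrix}$ and $\hat A_{\mathbf{a}}=\hat A_{a_k}\cdots\hat A_{a_2}\hat A_{a_1}$. A nonnegative square matrix is primitive if some power has all entries positive. For irrational $\alpha=[a_1,a_2,\dots]$ (continued fraction), $q_n(\alpha)$ are the denominators of the convergents: $q_{-1}=0$, $q_0=1$, $q_{n+1}=a_{n+1}q_n+q_{n-1}$. $\mathcal{P}(\mathbf{a})$ is the set of $\alpha\in[0,1]\setminus\mathbb{Q}$ with purely periodic expansion $\alpha=[\overline{a_1,\dots,a_k}]$. For positive sequences, $x_n\sim y_n$ means $C^{-1}y_n\le x_n\le Cy_n$ for some constant $C>1$ independent of $n$. *)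

theory Defs
  imports Complex_Main
begin

datatype ty = T1 | T2 | T3

text \<open>A letter (t,i)_n is represented as the triple (t, i, n).\<close>
type_synonym letter = "ty \<times> nat \<times> nat"

definition alphabet :: "nat \<Rightarrow> letter set" where
  "alphabet n = {(T1, i, n) | i. 1 \<le> i \<and> i \<le> n + 1} \<union> {(T2, 1, n)}
                 \<union> {(T3, i, n) | i. 1 \<le> i \<and> i \<le> n}"

definition letter_type :: "letter \<Rightarrow> ty" where
  "letter_type e = fst e"

fun arrow :: "ty \<Rightarrow> letter \<Rightarrow> bool" where
  "arrow t (t', i, m) =
     ((t = T1 \<and> t' = T2 \<and> i = 1)
    \<or> (t = T2 \<and> t' = T1 \<and> 1 \<le> i \<and> i \<le> m + 1)
    \<or> (t = T2 \<and> t' = T3 \<and> 1 \<le> i \<and> i \<le> m)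
    \<or> (t = T3 \<and> t' = T1 \<and> 1 \<le> i \<and> i \<le> m)
    \<or> (t = T3 \<and> t' = T3 \<and> 1 \<le> i \<and> i + 1 \<le> m))"

text \<open>The set of admissible words for the word a = a_1 ... a_k (0-indexed list).\<close>
definition adm_words :: "nat list \<Rightarrow> letter list set" where
  "adm_words a = {w. length w = length a
        \<and> (\<forall>i<length a. w ! i \<in> alphabet (a ! i))
        \<and> (\<forall>i. i + 1 < length a \<longrightarrow> arrow (letter_type (w ! i)) (w ! (i + 1)))}"

text \<open>Incidence matrix A_a, as a function on the (finite) index set adm_words a:
  entry (v,w) is 1 iff t(v) -> h_w, where t(v) is the type of the last letter
  and h_w the first letter.\<close>
definition incA :: "nat list \<Rightarrow> letter list \<Rightarrow> letter list \<Rightarrow> real" where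
  "incA a v w = (if arrow (letter_type (last v)) (hd w) then 1 else 0)"

definition matmul :: "'i set \<Rightarrow> ('i \<Rightarrow> 'i \<Rightarrow> real) \<Rightarrow> ('i \<Rightarrow> 'i \<Rightarrow> real) \<Rightarrow> 'i \<Rightarrow> 'i \<Rightarrow> real" where
  "matmul I M N v w = (\<Sum>u\<in>I. M v u * N u w)"

definition matid :: "'i \<Rightarrow> 'i \<Rightarrow> real" where
  "matid v w = (if v = w then 1 else 0)"

fun matpow :: "'i set \<Rightarrow> ('i \<Rightarrow> 'i \<Rightarrow> real) \<Rightarrow> nat \<Rightarrow> 'i \<Rightarrow> 'i \<Rightarrow> real" where
  "matpow I M 0 = matid"
| "matpow I M (Suc k) = matmul I (matpow I M k) M"

definition primitive :: "'i set \<Rightarrow> ('i \<Rightarrow> 'i \<Rightarrow> real) \<Rightarrow> bool" where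
  "primitive I M \<longleftrightarrow> (\<forall>v\<in>I. \<forall>w\<in>I. 0 \<le> M v w)
      \<and> (\<exists>k\<ge>1. \<forall>v\<in>I. \<forall>w\<in>I. 0 < matpow I M k v w)"

text \<open>(Complex) eigenvalues and the spectral radius; for a primitive matrix the spectral
  radius is its Perron--Frobenius eigenvalue.\<close>
definition is_eigenvalue :: "'i set \<Rightarrow> ('i \<Rightarrow> 'i \<Rightarrow> real) \<Rightarrow> complex \<Rightarrow> bool" where
  "is_eigenvalue I M c \<longleftrightarrow> (\<exists>x :: 'i \<Rightarrow> complex. (\<exists>v\<in>I. x v \<noteq> 0)
      \<and> (\<forall>v\<in>I. (\<Sum>w\<in>I. complex_of_real (M v w) * x w) = c * x v))"

definition PF_eigenvalue :: "'i set \<Rightarrow> ('i \<Rightarrow> 'i \<Rightarrow> real) \<Rightarrow> real" where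
  "PF_eigenvalue I M = Sup {cmod c | c. is_eigenvalue I M c}"

definition idx3 :: "nat set" where "idx3 = {0, 1, 2}"

definition hatA :: "nat \<Rightarrow> nat \<Rightarrow> nat \<Rightarrow> real" where
  "hatA m i j =
     (if i = 0 then (if j = 1 then 1 else 0)
      else if i = 1 then (if j = 0 then real m + 1 else if j = 2 then real m else 0)
      else if i = 2 then (if j = 0 then real m else if j = 2 then real m - 1 else 0)
      else 0)"

text \<open>hat A_a = hat A_{a_k} ... hat A_{a_2} hat A_{a_1}.\<close>
definition hatA_word :: "nat list \<Rightarrow> nat \<Rightarrow> nat \<Rightarrow> real" where
  "hatA_word a = foldl (\<lambda>P m. matmul idx3 (hatA m) P) matid a"

definition gauss :: "real \<Rightarrow> real" where
  "gauss x = frac (1 / x)"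

text \<open>cf_digit x n is the partial quotient a_{n+1}(x) (0-indexed).\<close>
definition cf_digit :: "real \<Rightarrow> nat \<Rightarrow> nat" where
  "cf_digit x n = nat \<lfloor>1 / (gauss ^^ n) x\<rfloor>"

fun q_den :: "real \<Rightarrow> nat \<Rightarrow> nat" where
  "q_den x 0 = 1"
| "q_den x (Suc 0) = cf_digit x 0"
| "q_den x (Suc (Suc n)) = cf_digit x (Suc n) * q_den x (Suc n) + q_den x n"

definition purely_periodic :: "nat list \<Rightarrow> real set" where
  "purely_periodic a = {x. 0 \<le> x \<and> x \<le> 1 \<and> x \<notin> \<rat>
        \<and> (\<forall>n. cf_digit x n = a ! (n mod length a))}"

end

theory Submission
  imports Defs
begin

lemma matmul_assoc:
  assumes "finite I"
  shows "matmul I (matmul I A B) C = matmul I A (matmul I B C)"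
proof (intro ext)
  fix v w
  have "matmul I (matmul I A B) C v w = (\<Sum>u\<in>I. \<Sum>x\<in>I. A v x * B x u * C u w)"
    unfolding matmul_def by (simp add: sum_distrib_right)
  also have "\<dots> = (\<Sum>x\<in>I. \<Sum>u\<in>I. A v x * B x u * C u w)"
    by (rule sum.swap)
  also have "\<dots> = matmul I A (matmul I B C) v w"
    unfolding matmul_def by (simp add: sum_distrib_left mult.assoc)
  finally show "matmul I (matmul I A B) C v w = matmul I A (matmul I B C) v w" .
qed

lemma sum_idx3: "(\<Sum>l\<in>idx3. f l) = f 0 + f 1 + f 2"
  by (simp add: idx3_def add.assoc)

lemma finite_idx3[simp]: "finite idx3" by (simp add: idx3_def)

lemma matmul_cong_left:
  assumes "\<forall>u\<in>I. X v u = Y v u"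
  shows "matmul I X M v w = matmul I Y M v w"
  using assms unfolding matmul_def by (intro sum.cong) auto

lemma matmul_id_left: "finite I \<Longrightarrow> v \<in> I \<Longrightarrow> matmul I matid A v w = A v w"
proof -
  assume "finite I" "v \<in> I"
  have "matmul I matid A v w = (\<Sum>u\<in>I. if v = u then A u w else 0)"
    unfolding matmul_def matid_def by (rule sum.cong) auto
  then show ?thesis using \<open>finite I\<close> \<open>v \<in> I\<close> by simp
qed

lemma matmul_id_right: "finite I \<Longrightarrow> w \<in> I \<Longrightarrow> matmul I A matid v w = A v w"
proof -
  assume "finite I" "w \<in> I"
  have "matmul I A matid v w = (\<Sum>u\<in>I. if u = w then A v u else 0)"
    unfolding matmul_def matid_def by (rule sum.cong) auto
  then show ?thesis using \<open>finite I\<close> \<open>w \<in> I\<close> by simp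
qed

lemma matpow_add:
  assumes "finite I" "v \<in> I" "w \<in> I"
  shows "matpow I M (m + n) v w = matmul I (matpow I M m) (matpow I M n) v w"
  using assms(3)
proof (induction n arbitrary: w)
  case 0
  then show ?case using assms by (simp add: matmul_id_right)
next
  case (Suc n)
  have "matpow I M (m + Suc n) v w = matmul I (matpow I M (m+n)) M v w" by simp
  also have "\<dots> = matmul I (matmul I (matpow I M m) (matpow I M n)) M v w"
    using Suc.IH by (intro matmul_cong_left) auto
  also have "\<dots> = matmul I (matpow I M m) (matpow I M (Suc n)) v w"
    using assms(1) by (simp add: matmul_assoc)
  finally show ?case .
qed

lemma matpow_Suc_left:
  assumes "finite I" "v \<in> I" "w \<in> I"
  shows "matpow I M (Suc n) v w = matmul I M (matpow I M n) v w"
proof -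
  have "matpow I M (Suc n) v w = matpow I M (1 + n) v w" by simp
  also have "\<dots> = matmul I (matpow I M 1) (matpow I M n) v w"
    using assms by (rule matpow_add)
  also have "\<dots> = matmul I M (matpow I M n) v w"
    using assms by (intro matmul_cong_left) (simp add: matmul_id_left)
  finally show ?thesis .
qed

definition nn :: "'i set \<Rightarrow> ('i \<Rightarrow> 'i \<Rightarrow> real) \<Rightarrow> bool" where
  "nn I A \<longleftrightarrow> (\<forall>v\<in>I. \<forall>w\<in>I. 0 \<le> A v w)"
definition le :: "'i set \<Rightarrow> ('i \<Rightarrow> 'i \<Rightarrow> real) \<Rightarrow> ('i \<Rightarrow> 'i \<Rightarrow> real) \<Rightarrow> bool" where
  "le I A B \<longleftrightarrow> (\<forall>v\<in>I. \<forall>w\<in>I. A v w \<le> B v w)"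

lemma nn_matmul: "nn I A \<Longrightarrow> nn I B \<Longrightarrow> nn I (matmul I A B)"
  unfolding nn_def matmul_def by (auto intro!: sum_nonneg)

lemma nn_matid: "nn I matid" unfolding nn_def matid_def by auto

lemma nn_matpow: "nn I A \<Longrightarrow> nn I (matpow I A n)"
  by (induction n) (auto intro: nn_matmul nn_matid)

lemma le_matmul: "nn I A \<Longrightarrow> nn I B \<Longrightarrow> le I A A' \<Longrightarrow> le I B B' \<Longrightarrow>
   le I (matmul I A B) (matmul I A' B')"
  unfolding nn_def le_def matmul_def
proof (intro ballI sum_mono)
  fix v w u assume h: "\<forall>v\<in>I. \<forall>w\<in>I. 0 \<le> A v w" "\<forall>v\<in>I. \<forall>w\<in>I. 0 \<le> B v w"
    "\<forall>v\<in>I. \<forall>w\<in>I. A v w \<le> A' v w" "\<forall>v\<in>I. \<forall>w\<in>I. B v w \<le> B' v w"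
    and "v \<in> I" "w \<in> I" "u \<in> I"
  then have "A v u \<le> A' v u" "B u w \<le> B' u w" "0 \<le> A v u" "0 \<le> B u w"
    by auto
  then have "A v u \<le> A' v u" "B u w \<le> B' u w" "0 \<le> A' v u" "0 \<le> B u w"
    by auto
  then show "A v u * B u w \<le> A' v u * B' u w" by (rule mult_mono)
qed

lemma le_refl': "le I A A" unfolding le_def by auto

lemma le_matpow: "nn I A \<Longrightarrow> le I A B \<Longrightarrow> le I (matpow I A n) (matpow I B n)"
  by (induction n) (auto intro: le_matmul nn_matpow le_refl')

lemma le_trans': "le I A B \<Longrightarrow> le I B C \<Longrightarrow> le I A C"
  unfolding le_def by (meson order_trans)

lemma le_matpow_mult:
  assumes "finite I" "nn I H" "le I (matpow I H k) B"
  shows "le I (matpow I H (k*j)) (matpow I B j)"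
proof (induction j)
  case 0
  then show ?case by (simp add: le_refl')
next
  case (Suc j)
  have "le I (matmul I (matpow I H (k*j)) (matpow I H k)) (matpow I B (Suc j))"
    using Suc assms by (auto intro!: le_matmul nn_matpow)
  moreover have "matpow I H (k * Suc j) v w = matmul I (matpow I H (k*j)) (matpow I H k) v w"
    if "v \<in> I" "w \<in> I" for v w
    using matpow_add[OF assms(1) that, of H "k*j" k] by (simp add: add.commute)
  ultimately show ?case unfolding le_def by auto
qed

lemma matpow_rec3: "matpow idx3 M (Suc n) i j = matpow idx3 M n i 0 * M 0 j + matpow idx3 M n i 1 * M 1 j + matpow idx3 M n i 2 * M 2 j"
  by (simp add: matmul_def sum_idx3)

lemma H1_pos5: "i \<in> idx3 \<Longrightarrow> j \<in> idx3 \<Longrightarrow> 0 < matpow idx3 (hatA 1) 5 i j"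
proof -
  assume "i \<in> idx3" "j \<in> idx3"
  then have "i = 0 \<or> i = 1 \<or> i = 2" "j = 0 \<or> j = 1 \<or> j = 2" by (auto simp: idx3_def)
  then show ?thesis
    by (auto simp del: matpow.simps(2) simp add: matpow_rec3 hatA_def matid_def eval_nat_numeral)
qed

lemma H1_pos_all: "5 \<le> n \<Longrightarrow> \<forall>i\<in>idx3. \<forall>j\<in>idx3. 0 < matpow idx3 (hatA 1) n i j"
proof (induction n rule: dec_induct)
  case base
  then show ?case using H1_pos5 by blast
next
  case (step n)
  show ?case
  proof (intro ballI)
    fix i j assume ij: "i \<in> idx3" "j \<in> idx3"
    have p0: "0 < matpow idx3 (hatA 1) n i 0" and p1: "0 < matpow idx3 (hatA 1) n i 1"
      and p2: "0 < matpow idx3 (hatA 1) n i 2" using step(3) ij by (auto simp: idx3_def)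
    have "j = 0 \<or> j = 1 \<or> j = 2" using ij by (auto simp: idx3_def)
    then show "0 < matpow idx3 (hatA 1) (Suc n) i j"  using p0 p1 p2 unfolding matpow_rec3
      by (auto simp: hatA_def intro: add_pos_nonneg add_nonneg_pos)
  qed
qed

lemma H1_pos: "5 \<le> n \<Longrightarrow> i \<in> idx3 \<Longrightarrow> j \<in> idx3 \<Longrightarrow> 0 < matpow idx3 (hatA 1) n i j"
  using H1_pos_all by blast

lemma prim3:
  assumes "nn idx3 B" "le idx3 (matpow idx3 (hatA 1) k) B" "1 \<le> k"
  shows "\<forall>i\<in>idx3. \<forall>j\<in>idx3. 0 < matpow idx3 B 5 i j"
proof (intro ballI)
  fix i j assume ij: "i \<in> idx3" "j \<in> idx3"
  have nnH: "nn idx3 (hatA 1)" by (auto simp: nn_def hatA_def)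
  have "le idx3 (matpow idx3 (hatA 1) (k*5)) (matpow idx3 B 5)"
    by (rule le_matpow_mult[OF finite_idx3 nnH assms(2)])
  moreover have "0 < matpow idx3 (hatA 1) (k*5) i j" using assms(3) ij by (intro H1_pos) auto
  ultimately show "0 < matpow idx3 B 5 i j" using ij unfolding le_def by force
qed

lemma nn_hatA: "1 \<le> m \<Longrightarrow> nn idx3 (hatA m)"
  by (auto simp: nn_def hatA_def idx3_def)

lemma le_hatA: "1 \<le> m \<Longrightarrow> le idx3 (hatA 1) (hatA m)"
  by (auto simp: le_def hatA_def idx3_def)

lemma hatA_word_snoc: "hatA_word (a @ [m]) = matmul idx3 (hatA m) (hatA_word a)"
  by (simp add: hatA_word_def)

lemma hatA_word_bounds:
  "\<forall>m\<in>set a. 1 \<le> m \<Longrightarrow> nn idx3 (hatA_word a) \<and> le idx3 (matpow idx3 (hatA 1) (length a)) (hatA_word a)"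
proof (induction a rule: rev_induct)
  case Nil
  then show ?case by (simp add: hatA_word_def nn_matid le_refl')
next
  case (snoc m a)
  then have IH: "nn idx3 (hatA_word a)" "le idx3 (matpow idx3 (hatA 1) (length a)) (hatA_word a)"
    and m: "1 \<le> m" by auto
  have nnH: "nn idx3 (hatA 1)" by (auto simp: nn_def hatA_def)
  have "le idx3 (matmul idx3 (hatA 1) (matpow idx3 (hatA 1) (length a))) (matmul idx3 (hatA m) (hatA_word a))"
    using IH m nnH by (intro le_matmul nn_matpow le_hatA)
  moreover have "matpow idx3 (hatA 1) (Suc (length a)) v w = matmul idx3 (hatA 1) (matpow idx3 (hatA 1) (length a)) v w"
    if "v \<in> idx3" "w \<in> idx3" for v w using that by (intro matpow_Suc_left) auto
  ultimately have "le idx3 (matpow idx3 (hatA 1) (length (a @ [m]))) (hatA_word (a @ [m]))"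
    unfolding le_def hatA_word_snoc by simp
  moreover have "nn idx3 (hatA_word (a @ [m]))"
    unfolding hatA_word_snoc using IH m by (intro nn_matmul nn_hatA)
  ultimately show ?case by simp
qed

lemma primitive_hatA_word:
  assumes "a \<noteq> []" "\<forall>m\<in>set a. 1 \<le> m"
  shows "primitive idx3 (hatA_word a)"
proof -
  from hatA_word_bounds[OF assms(2)] have h: "nn idx3 (hatA_word a)"
    "le idx3 (matpow idx3 (hatA 1) (length a)) (hatA_word a)" by auto
  have "\<forall>i\<in>idx3. \<forall>j\<in>idx3. 0 < matpow idx3 (hatA_word a) 5 i j"
    using assms(1) by (intro prim3[OF h]) (simp add: Suc_leI)
  then show ?thesis using h(1) unfolding primitive_def nn_def
    by (intro conjI) (auto intro!: exI[of _ 5])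
qed

section \<open>2x2 matrices\<close>

datatype m2 = M2 real real real real

fun mul :: "m2 \<Rightarrow> m2 \<Rightarrow> m2" where
  "mul (M2 a b c d) (M2 e f g h) = M2 (a*e+b*g) (a*f+b*h) (c*e+d*g) (c*f+d*h)"
fun app :: "m2 \<Rightarrow> real \<times> real \<Rightarrow> real \<times> real" where
  "app (M2 a b c d) (x, y) = (a*x+b*y, c*x+d*y)"
fun tr :: "m2 \<Rightarrow> m2" where "tr (M2 a b c d) = M2 a c b d"
fun Ef :: "m2 \<Rightarrow> real" where "Ef (M2 a b c d) = (a + d + sqrt ((a-d)^2 + 4*b*c)) / 2"
fun good :: "m2 \<Rightarrow> bool" where
  "good (M2 a b c d) = (0 \<le> a \<and> 0 \<le> b \<and> 0 \<le> c \<and> 0 \<le> d \<and> 1 \<le> a \<and> 1 \<le> c + d)"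

definition Cm :: "nat \<Rightarrow> m2" where "Cm m = M2 (real m) 1 1 0"
definition cstep :: "nat \<Rightarrow> real \<times> real \<Rightarrow> real \<times> real" where
  "cstep m p = (real m * fst p + snd p, fst p)"
definition Um :: "nat list \<Rightarrow> m2" where "Um a = foldr (\<lambda>m M. mul (Cm m) M) a (M2 1 0 0 1)"

lemma app_mul: "app (mul A B) p = app A (app B p)"
  by (cases A; cases B; cases p) (simp add: algebra_simps)

lemma mul_assoc: "mul (mul A B) C = mul A (mul B C)"
  by (cases A; cases B; cases C) (simp add: algebra_simps)

lemma tr_mul: "tr (mul A B) = mul (tr B) (tr A)"
  by (cases A; cases B) (simp add: algebra_simps)

lemma mul_id_left: "mul (M2 1 0 0 1) A = A" by (cases A) simp
lemma mul_id_right: "mul A (M2 1 0 0 1) = A" by (cases A) simp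

lemma app_Um: "app (Um a) p = foldr cstep a p"
proof (induction a arbitrary: p)
  case Nil
  then show ?case by (cases p) (simp add: Um_def)
next
  case (Cons m a)
  have "app (Um (m # a)) p = app (Cm m) (app (Um a) p)" by (simp add: Um_def app_mul)
  also have "\<dots> = cstep m (foldr cstep a p)"
  proof -
    have "app (Cm m) q = cstep m q" for q by (cases q) (simp add: Cm_def cstep_def)
    then show ?thesis using Cons by simp
  qed
  finally show ?case by simp
qed

lemma Um_append: "Um (a @ b) = mul (Um a) (Um b)"
  by (induction a) (simp_all add: Um_def mul_id_left mul_assoc)

lemma Um_rev: "Um (rev a) = tr (Um a)"
proof (induction a)
  case Nil
  then show ?case by (simp add: Um_def)
next
  case (Cons m a)
  have "Um [m] = Cm m" by (simp add: Um_def mul_id_right)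
  then have "Um (rev (m # a)) = mul (tr (Um a)) (Cm m)"
    using Cons by (simp add: Um_append)
  also have "\<dots> = tr (Um (m # a))" by (simp add: Um_def tr_mul Cm_def)
  finally show ?case .
qed

lemma Ef_tr: "Ef (tr M) = Ef M" by (cases M) (simp add: mult.commute mult.left_commute)

lemma good_Um: "\<forall>m\<in>set a. 1 \<le> m \<Longrightarrow> good (Um a)"
proof (induction a)
  case Nil
  then show ?case by (simp add: Um_def)
next
  case (Cons m a)
  then have g: "good (Um a)" and m: "1 \<le> m" by auto
  obtain n11 n12 n21 n22 where U: "Um a = M2 n11 n12 n21 n22" by (cases "Um a")
  have "Um (m # a) = M2 (real m * n11 + n21) (real m * n12 + n22) n11 n12"
    using U by (simp add: Um_def Cm_def)
  moreover have "n11 \<le> real m * n11" using g m U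
    mult_right_mono[of 1 "real m" n11] by simp
  moreover have "1 \<le> n11" "0 \<le> n21" using g U by auto
  ultimately have "1 \<le> real m * n11 + n21" by linarith
  with g U m \<open>Um (m # a) = _\<close> show ?case by auto
qed

lemma eig2:
  assumes "0 \<le> g11" "0 \<le> g12" "0 < g21" "0 \<le> g22" "g21 + g22 < g11 + g12"
  defines "E \<equiv> Ef (M2 g11 g12 g21 g22)"
  shows "app (M2 g11 g12 g21 g22) (E - g22, g21) = (E * (E - g22), E * g21)
     \<and> g21 < E - g22 \<and> 0 < E"
proof -
  define D where "D = (g11 - g22)^2 + 4*g12*g21"
  define s where "s = sqrt D"
  have D0: "0 \<le> D" unfolding D_def using assms by simp
  have ss: "s * s = D" unfolding s_def using D0 by simp
  have Es: "E = (g11 + g22 + s) / 2" unfolding E_def s_def D_def by simp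
  have "(E - g11) * (E - g22) = (s*s - (g11 - g22)^2) / 4"
    unfolding Es by (simp add: field_simps power2_eq_square)
  also have "\<dots> = g12 * g21" using ss unfolding D_def by simp
  finally have prod: "(E - g11) * (E - g22) = g12 * g21" .
  have c1: "g11 * (E - g22) + g12 * g21 = E * (E - g22)"
  proof -
    have "E * (E - g22) - g11 * (E - g22) = (E - g11) * (E - g22)" by algebra
    then show ?thesis using prod by linarith
  qed
  have c2: "g21 * (E - g22) + g22 * g21 = E * g21" by algebra
  have gt: "2 * (g21 + g22) - (g11 + g22) < s"
  proof (cases "2 * (g21 + g22) - (g11 + g22) < 0")
    case True
    then show ?thesis unfolding s_def using D0 by (smt (verit) real_sqrt_ge_zero)
  next
    case False
    have "D - (2 * (g21 + g22) - (g11 + g22))^2 = 4 * g21 * (g11 + g12 - g21 - g22)"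
      unfolding D_def by (simp add: power2_eq_square algebra_simps)
    moreover have "0 < 4 * g21 * (g11 + g12 - g21 - g22)" using assms by simp
    ultimately have "(2 * (g21 + g22) - (g11 + g22))^2 < D" by linarith
    then show ?thesis unfolding s_def by (rule real_less_rsqrt)
  qed
  have E2: "2 * E = g11 + g22 + s" unfolding Es by simp
  have "g21 < E - g22" using gt E2 by (smt (verit))
  moreover have "0 < E" using gt assms E2 by (smt (verit))
  ultimately show ?thesis using c1 c2 by (simp add: mult.commute)
qed

lemma Um_eig:
  assumes "a \<noteq> []" "\<forall>m\<in>set a. 1 \<le> m"
  shows "\<exists>p. app (Um a) p = (Ef (Um a) * fst p, Ef (Um a) * snd p) \<and> snd p < fst p \<and> 0 < snd p
     \<and> 0 < Ef (Um a)"
proof -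
  obtain m b where a: "a = m # b" using assms(1) by (cases a) auto
  have m: "1 \<le> m" and g: "good (Um b)" using assms(2) a by (auto intro: good_Um)
  obtain n11 n12 n21 n22 where U: "Um b = M2 n11 n12 n21 n22" by (cases "Um b")
  have Ua: "Um a = M2 (real m * n11 + n21) (real m * n12 + n22) n11 n12"
    using U a by (simp add: Um_def Cm_def)
  have "0 \<le> (real m - 1) * (n11 + n12)" using m g U by simp
  then have cond: "n11 + n12 < (real m * n11 + n21) + (real m * n12 + n22)"
    using g U by (simp add: algebra_simps)
  have "0 \<le> real m * n11 + n21" "0 \<le> real m * n12 + n22" "0 < n11" "0 \<le> n12"
    using g U by auto
  from eig2[OF this cond] show ?thesis unfolding Ua using g U
    by (intro exI[of _ "(Ef (M2 (real m * n11 + n21) (real m * n12 + n22) n11 n12) - n12, n11)"]) auto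
qed

section \<open>Perron eigenvalue characterization\<close>

lemma PF_char:
  assumes fin: "finite I" and ne: "I \<noteq> {}" and nnM: "nn I M" and up: "\<forall>v\<in>I. 0 < u v"
    and eq: "\<forall>v\<in>I. (\<Sum>w\<in>I. M v w * u w) = E * u v"
  shows "PF_eigenvalue I M = E"
proof -
  obtain v0 where v0: "v0 \<in> I" using ne by auto
  have "0 \<le> (\<Sum>w\<in>I. M v0 w * u w)" using nnM up v0 unfolding nn_def
    by (intro sum_nonneg) (auto intro: mult_nonneg_nonneg less_imp_le)
  then have "0 \<le> E * u v0" using eq v0 by simp
  moreover have "0 < u v0" using up v0 by auto
  ultimately have E0: "0 \<le> E" by (simp add: zero_le_mult_iff)
  have eigE: "is_eigenvalue I M (complex_of_real E)"
    unfolding is_eigenvalue_def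
  proof (intro exI[of _ "\<lambda>w. complex_of_real (u w)"] conjI ballI)
    show "\<exists>v\<in>I. complex_of_real (u v) \<noteq> 0" using v0 up by force
  next
    fix v assume "v \<in> I"
    have "(\<Sum>w\<in>I. complex_of_real (M v w) * complex_of_real (u w))
        = complex_of_real (\<Sum>w\<in>I. M v w * u w)" by simp
    also have "\<dots> = complex_of_real E * complex_of_real (u v)" using eq \<open>v \<in> I\<close> by simp
    finally show "(\<Sum>w\<in>I. complex_of_real (M v w) * complex_of_real (u w))
        = complex_of_real E * complex_of_real (u v)" .
  qed
  have bound: "cmod c \<le> E" if ev: "is_eigenvalue I M c" for c
  proof -
    obtain x where x1: "\<exists>v\<in>I. x v \<noteq> 0"
      and x2: "\<forall>v\<in>I. (\<Sum>w\<in>I. complex_of_real (M v w) * x w) = c * x v"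
      using ev unfolding is_eigenvalue_def by blast
    obtain v1 where v1: "v1 \<in> I" "x v1 \<noteq> 0" using x1 by blast
    define r where "r w = cmod (x w) / u w" for w
    define t where "t = Max (r ` I)"
    have "t \<in> r ` I" unfolding t_def using fin ne by (intro Max_in) auto
    then obtain v where v: "v \<in> I" "r v = t" by auto
    have rle: "r w \<le> t" if "w \<in> I" for w unfolding t_def using fin that by (intro Max_ge) auto
    have "0 < r v1" unfolding r_def using v1 up by auto
    then have t0: "0 < t" using rle[OF v1(1)] by linarith
    have xv: "cmod (x v) = t * u v" using v up unfolding r_def by (auto simp: field_simps)
    have xv0: "0 < cmod (x v)" using xv t0 up v by simp
    have xw: "cmod (x w) \<le> t * u w" if "w \<in> I" for w
      using rle[OF that] up that unfolding r_def by (auto simp: field_simps)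
    have "cmod c * cmod (x v) = cmod (\<Sum>w\<in>I. complex_of_real (M v w) * x w)"
      using x2 v by (simp add: norm_mult)
    also have "\<dots> \<le> (\<Sum>w\<in>I. cmod (complex_of_real (M v w) * x w))" by (rule norm_sum)
    also have "\<dots> = (\<Sum>w\<in>I. M v w * cmod (x w))"
      using nnM v unfolding nn_def by (intro sum.cong) (auto simp: norm_mult)
    also have "\<dots> \<le> (\<Sum>w\<in>I. M v w * (t * u w))"
      using nnM v xw unfolding nn_def by (intro sum_mono mult_left_mono) auto
    also have "\<dots> = t * (\<Sum>w\<in>I. M v w * u w)"
      by (simp add: sum_distrib_left algebra_simps)
    also have "\<dots> = E * cmod (x v)" using eq v xv by simp
    finally have "cmod c * cmod (x v) \<le> E * cmod (x v)" .
    then show ?thesis using xv0 by simp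
  qed
  show ?thesis unfolding PF_eigenvalue_def
  proof (rule cSup_eq_maximum)
    show "E \<in> {cmod c |c. is_eigenvalue I M c}" using eigE E0
      by (intro CollectI exI[of _ "complex_of_real E"]) auto
  next
    fix y assume "y \<in> {cmod c |c. is_eigenvalue I M c}"
    then show "y \<le> E" using bound by auto
  qed
qed

definition Qv :: "real \<times> real \<Rightarrow> nat \<Rightarrow> real" where
  "Qv p i = (if i = 0 then snd p else if i = 1 then fst p else fst p - snd p)"

lemma hatA_Q: "i \<in> idx3 \<Longrightarrow> (\<Sum>j\<in>idx3. hatA m i j * Qv p j) = Qv (cstep m p) i"
  unfolding sum_idx3 by (auto simp: idx3_def hatA_def Qv_def cstep_def algebra_simps)

lemma hatA_word_Q: "i \<in> idx3 \<Longrightarrow>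
   (\<Sum>j\<in>idx3. hatA_word a i j * Qv p j) = Qv (foldl (\<lambda>p m. cstep m p) p a) i"
proof (induction a arbitrary: i rule: rev_induct)
  case Nil
  have "(\<Sum>j\<in>idx3. matid i j * Qv p j) = (\<Sum>j\<in>idx3. if i = j then Qv p j else 0)"
    by (rule sum.cong) (auto simp: matid_def)
  then show ?case using Nil by (simp add: hatA_word_def)
next
  case (snoc m a)
  have "(\<Sum>j\<in>idx3. hatA_word (a @ [m]) i j * Qv p j)
      = (\<Sum>j\<in>idx3. \<Sum>l\<in>idx3. hatA m i l * hatA_word a l j * Qv p j)"
    unfolding hatA_word_snoc matmul_def by (simp add: sum_distrib_right)
  also have "\<dots> = (\<Sum>l\<in>idx3. hatA m i l * (\<Sum>j\<in>idx3. hatA_word a l j * Qv p j))"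
    by (subst sum.swap) (simp add: sum_distrib_left mult.assoc)
  also have "\<dots> = (\<Sum>l\<in>idx3. hatA m i l * Qv (foldl (\<lambda>p m. cstep m p) p a) l)"
    using snoc.IH by (intro sum.cong) auto
  also have "\<dots> = Qv (foldl (\<lambda>p m. cstep m p) p (a @ [m])) i"
    using snoc.prems by (simp add: hatA_Q)
  finally show ?case .
qed

lemma foldl_cstep: "foldl (\<lambda>p m. cstep m p) p a = app (Um (rev a)) p"
  by (simp add: app_Um foldl_conv_foldr)

section \<open>Admissible words\<close>

fun tyi :: "ty \<Rightarrow> nat" where "tyi T1 = 0" | "tyi T2 = 1" | "tyi T3 = 2"
definition ity :: "nat \<Rightarrow> ty" where "ity j = (if j = 0 then T1 else if j = 1 then T2 else T3)"
lemma ity_tyi[simp]: "ity (tyi t) = t" by (cases t) (auto simp: ity_def)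
lemma tyi_idx3[simp]: "tyi t \<in> idx3" by (cases t) (auto simp: idx3_def)

definition arr :: "nat \<Rightarrow> letter \<Rightarrow> real" where
  "arr j e = (if arrow (ity j) e then 1 else 0)"

definition lt :: "letter list \<Rightarrow> nat" where "lt u = tyi (letter_type (last u))"

definition Sa :: "nat list \<Rightarrow> nat \<Rightarrow> (nat \<Rightarrow> real) \<Rightarrow> real" where
  "Sa a j h = (\<Sum>u\<in>adm_words a. arr j (hd u) * h (lt u))"

lemma alphabet_eq: "alphabet m = (\<lambda>i. (T1, i, m)) ` {1..m+1} \<union> {(T2, 1, m)} \<union> (\<lambda>i. (T3, i, m)) ` {1..m}"
  by (auto simp: alphabet_def)

lemma finite_alphabet[simp]: "finite (alphabet m)"
  by (simp add: alphabet_eq)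

lemma alph_split: "(\<Sum>e\<in>alphabet m. F e) = (\<Sum>i\<in>{1..m+1}. F (T1, i, m)) + F (T2, 1, m) + (\<Sum>i\<in>{1..m}. F (T3, i, m))"
proof -
  have d1: "(\<lambda>i. (T1, i, m)) ` {1..m+1} \<inter> {(T2, 1, m)} = {}" by auto
  have d2: "((\<lambda>i. (T1, i, m)) ` {1..m+1} \<union> {(T2, 1, m)}) \<inter> (\<lambda>i. (T3, i, m)) ` {1..m} = {}" by auto
  have i1: "inj_on (\<lambda>i. (T1, i, m)) A" for A by (auto simp: inj_on_def)
  have i3: "inj_on (\<lambda>i. (T3, i, m)) A" for A by (auto simp: inj_on_def)
  have "sum F ((\<lambda>i. (T1, i, m)) ` {1..m+1} \<union> {(T2, 1, m)} \<union> (\<lambda>i. (T3, i, m)) ` {1..m})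
     = sum F ((\<lambda>i. (T1, i, m)) ` {1..m+1} \<union> {(T2, 1, m)}) + sum F ((\<lambda>i. (T3, i, m)) ` {1..m})"
    by (rule sum.union_disjoint) (auto simp: d2)
  also have "sum F ((\<lambda>i. (T1, i, m)) ` {1..m+1} \<union> {(T2, 1, m)})
     = sum F ((\<lambda>i. (T1, i, m)) ` {1..m+1}) + sum F {(T2, 1, m)}"
    by (rule sum.union_disjoint) (auto simp: d1)
  also have "sum F ((\<lambda>i. (T1, i, m)) ` {1..m+1}) = (\<Sum>i\<in>{1..m+1}. F (T1, i, m))"
    by (rule sum.reindex_cong[OF i1]) auto
  also have "sum F ((\<lambda>i. (T3, i, m)) ` {1..m}) = (\<Sum>i\<in>{1..m}. F (T3, i, m))"
    by (rule sum.reindex_cong[OF i3]) auto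
  finally show ?thesis unfolding alphabet_eq by simp
qed

lemma cnt: "k \<le> n \<Longrightarrow> (\<Sum>i\<in>{1..n}. if i \<le> k then x else (0::real)) = real k * x"
proof -
  assume "k \<le> n"
  have "(\<Sum>i\<in>{1..n}. if i \<le> k then x else (0::real)) = (\<Sum>i\<in>{i\<in>{1..n}. i \<le> k}. x)"
    by (rule sum.inter_filter[symmetric]) simp
  also have "{i\<in>{1..n}. i \<le> k} = {1..k}" using \<open>k \<le> n\<close> by auto
  finally show ?thesis by simp
qed

lemma alph_sum:
  assumes m: "1 \<le> m" and j: "j \<in> idx3"
  shows "(\<Sum>e\<in>alphabet m. arr j e * g (tyi (letter_type e))) = (\<Sum>l\<in>idx3. hatA m j l * g l)"
proof -
  have "j = 0 \<or> j = 1 \<or> j = 2" using j by (auto simp: idx3_def)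
  moreover
  { assume j0: "j = 0"
    have ?thesis unfolding alph_split sum_idx3 using j0
      by (simp add: arr_def ity_def letter_type_def hatA_def) }
  moreover
  { assume j1: "j = 1"
    have a: "(\<Sum>i\<in>{1..m+1}. arr j (T1, i, m) * g (tyi (letter_type (T1, i, m)))) = (\<Sum>i\<in>{1..m+1}. g 0)"
      using j1 by (intro sum.cong) (auto simp: arr_def ity_def letter_type_def)
    have b: "(\<Sum>i\<in>{1..m}. arr j (T3, i, m) * g (tyi (letter_type (T3, i, m)))) = (\<Sum>i\<in>{1..m}. g 2)"
      using j1 by (intro sum.cong) (auto simp: arr_def ity_def letter_type_def)
    have ?thesis unfolding alph_split sum_idx3 a b using j1
      by (simp add: arr_def ity_def letter_type_def hatA_def algebra_simps) }
  moreover
  { assume j2: "j = 2"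
    have a: "(\<Sum>i\<in>{1..m+1}. arr j (T1, i, m) * g (tyi (letter_type (T1, i, m))))
        = (\<Sum>i\<in>{1..m+1}. if i \<le> m then g 0 else 0)"
      using j2 by (intro sum.cong) (auto simp: arr_def ity_def letter_type_def)
    have b: "(\<Sum>i\<in>{1..m}. arr j (T3, i, m) * g (tyi (letter_type (T3, i, m))))
        = (\<Sum>i\<in>{1..m}. if i \<le> m - 1 then g 2 else 0)"
      using j2 by (intro sum.cong) (auto simp: arr_def ity_def letter_type_def)
    have c1: "(\<Sum>i\<in>{1..m+1}. if i \<le> m then g 0 else 0) = real m * g 0" by (rule cnt) simp
    have c2: "(\<Sum>i\<in>{1..m}. if i \<le> m - 1 then g 2 else 0) = real (m - 1) * g 2" by (rule cnt) simp
    have ?thesis unfolding alph_split sum_idx3 a b c1 c2 using j2 m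
      by (simp add: arr_def ity_def letter_type_def hatA_def of_nat_diff algebra_simps) }
  ultimately show ?thesis by blast
qed

lemma adm_nil: "adm_words [] = {[]}"
  by (auto simp: adm_words_def)

lemma adm_single: "adm_words [m] = (\<lambda>e. [e]) ` alphabet m"
proof (rule set_eqI)
  fix x
  show "x \<in> adm_words [m] \<longleftrightarrow> x \<in> (\<lambda>e. [e]) ` alphabet m"
  proof
    assume "x \<in> adm_words [m]"
    then have "length x = 1" "x ! 0 \<in> alphabet m" by (auto simp: adm_words_def)
    then show "x \<in> (\<lambda>e. [e]) ` alphabet m"
      by (cases x) auto
  next
    assume "x \<in> (\<lambda>e. [e]) ` alphabet m"
    then show "x \<in> adm_words [m]" by (auto simp: adm_words_def)
  qed
qed

lemma adm_cons:
  assumes "a \<noteq> []"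
  shows "adm_words (m # a) = (\<lambda>(e, w). e # w) ` (SIGMA e:alphabet m. {w \<in> adm_words a. arrow (letter_type e) (hd w)})"
proof (rule set_eqI)
  fix x
  show "x \<in> adm_words (m # a) \<longleftrightarrow> x \<in> (\<lambda>(e, w). e # w) ` (SIGMA e:alphabet m. {w \<in> adm_words a. arrow (letter_type e) (hd w)})"
  proof
    assume x: "x \<in> adm_words (m # a)"
    then have len: "length x = Suc (length a)" by (simp add: adm_words_def)
    then obtain e w where xe: "x = e # w" by (cases x) auto
    have lw: "length w = length a" using len xe by simp
    have A: "\<forall>i<Suc (length a). (e # w) ! i \<in> alphabet ((m # a) ! i)"
      and B: "\<forall>i. i + 1 < Suc (length a) \<longrightarrow> arrow (letter_type ((e # w) ! i)) ((e # w) ! (i + 1))"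
      using x xe by (auto simp: adm_words_def)
    have e: "e \<in> alphabet m" using A[rule_format, of 0] by simp
    have w1: "\<forall>i<length a. w ! i \<in> alphabet (a ! i)"
      using A by auto
    have w2: "\<forall>i. i + 1 < length a \<longrightarrow> arrow (letter_type (w ! i)) (w ! (i + 1))"
    proof (intro allI impI)
      fix i assume "i + 1 < length a"
      then show "arrow (letter_type (w ! i)) (w ! (i + 1))" using B[rule_format, of "Suc i"] by simp
    qed
    have "w \<noteq> []" using lw assms by auto
    then have hw: "hd w = w ! 0" by (simp add: hd_conv_nth)
    have ar: "arrow (letter_type e) (hd w)" using B[rule_format, of 0] assms hw by simp
    have "w \<in> adm_words a" using lw w1 w2 by (simp add: adm_words_def)
    then show "x \<in> (\<lambda>(e, w). e # w) ` (SIGMA e:alphabet m. {w \<in> adm_words a. arrow (letter_type e) (hd w)})"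
      using e ar xe by force
  next
    assume "x \<in> (\<lambda>(e, w). e # w) ` (SIGMA e:alphabet m. {w \<in> adm_words a. arrow (letter_type e) (hd w)})"
    then obtain e w where xe: "x = e # w" and e: "e \<in> alphabet m" and w: "w \<in> adm_words a"
      and ar: "arrow (letter_type e) (hd w)" by auto
    have lw: "length w = length a" and w1: "\<forall>i<length a. w ! i \<in> alphabet (a ! i)"
      and w2: "\<forall>i. i + 1 < length a \<longrightarrow> arrow (letter_type (w ! i)) (w ! (i + 1))"
      using w by (auto simp: adm_words_def)
    have "w \<noteq> []" using lw assms by auto
    then have hw: "hd w = w ! 0" by (simp add: hd_conv_nth)
    have A: "\<forall>i<length (m # a). x ! i \<in> alphabet ((m # a) ! i)"
    proof (intro allI impI)
      fix i assume "i < length (m # a)"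
      then show "x ! i \<in> alphabet ((m # a) ! i)" using e w1 xe by (cases i) auto
    qed
    have B: "\<forall>i. i + 1 < length (m # a) \<longrightarrow> arrow (letter_type (x ! i)) (x ! (i + 1))"
    proof (intro allI impI)
      fix i assume "i + 1 < length (m # a)"
      then show "arrow (letter_type (x ! i)) (x ! (i + 1))" using ar hw w2 xe by (cases i) auto
    qed
    show "x \<in> adm_words (m # a)" using A B lw xe by (simp add: adm_words_def)
  qed
qed

lemma finite_adm: "finite (adm_words a)"
proof (induction a)
  case Nil
  then show ?case by (simp add: adm_nil)
next
  case (Cons m a)
  show ?case
  proof (cases "a = []")
    case True
    then show ?thesis by (simp add: adm_single)
  next
    case False
    then show ?thesis using Cons by (simp add: adm_cons)
  qed
qed

lemma adm_nonnil: "a \<noteq> [] \<Longrightarrow> w \<in> adm_words a \<Longrightarrow> w \<noteq> []"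
  by (auto simp: adm_words_def)

lemma Sa_single: "1 \<le> m \<Longrightarrow> j \<in> idx3 \<Longrightarrow> Sa [m] j h = (\<Sum>l\<in>idx3. hatA m j l * h l)"
proof -
  assume m: "1 \<le> m" and j: "j \<in> idx3"
  have "Sa [m] j h = (\<Sum>e\<in>alphabet m. arr j e * h (tyi (letter_type e)))"
    unfolding Sa_def adm_single by (simp add: sum.reindex inj_on_def lt_def)
  then show ?thesis using alph_sum[OF m j] by simp
qed

lemma Sa_cons:
  assumes m: "1 \<le> m" and j: "j \<in> idx3" and a: "a \<noteq> []"
  shows "Sa (m # a) j h = (\<Sum>l\<in>idx3. hatA m j l * Sa a l h)"
proof -
  let ?S = "SIGMA e:alphabet m. {w \<in> adm_words a. arrow (letter_type e) (hd w)}"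
  have inj: "inj_on (\<lambda>(e, w). e # w) ?S" by (auto simp: inj_on_def)
  have fS: "finite {w \<in> adm_words a. arrow (letter_type e) (hd w)}" for e
    using finite_adm by auto
  have "Sa (m # a) j h = (\<Sum>x\<in>?S. arr j (hd ((\<lambda>(e, w). e # w) x)) * h (lt ((\<lambda>(e, w). e # w) x)))"
    unfolding Sa_def adm_cons[OF a] by (simp add: sum.reindex[OF inj])
  also have "\<dots> = (\<Sum>(e, w)\<in>?S. arr j e * h (lt w))"
    using adm_nonnil[OF a] by (intro sum.cong) (auto simp: lt_def)
  also have "\<dots> = (\<Sum>e\<in>alphabet m. \<Sum>w\<in>{w \<in> adm_words a. arrow (letter_type e) (hd w)}. arr j e * h (lt w))"
    by (rule sum.Sigma[symmetric]) (auto simp: fS)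
  also have "\<dots> = (\<Sum>e\<in>alphabet m. arr j e * Sa a (tyi (letter_type e)) h)"
  proof (intro sum.cong refl)
    fix e
    have "(\<Sum>w\<in>{w \<in> adm_words a. arrow (letter_type e) (hd w)}. arr j e * h (lt w))
        = (\<Sum>w\<in>adm_words a. if arrow (letter_type e) (hd w) then arr j e * h (lt w) else 0)"
      by (simp add: sum.inter_filter finite_adm)
    also have "\<dots> = arr j e * Sa a (tyi (letter_type e)) h"
      unfolding Sa_def sum_distrib_left by (intro sum.cong) (auto simp: arr_def)
    finally show "(\<Sum>w\<in>{w \<in> adm_words a. arrow (letter_type e) (hd w)}. arr j e * h (lt w))
        = arr j e * Sa a (tyi (letter_type e)) h" .
  qed
  also have "\<dots> = (\<Sum>l\<in>idx3. hatA m j l * Sa a l h)"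
    by (rule alph_sum[OF m j])
  finally show ?thesis .
qed

lemma Sa_Q: "a \<noteq> [] \<Longrightarrow> \<forall>m\<in>set a. 1 \<le> m \<Longrightarrow> j \<in> idx3 \<Longrightarrow> Sa a j (Qv p) = Qv (foldr cstep a p) j"
proof (induction a arbitrary: j)
  case Nil
  then show ?case by simp
next
  case (Cons m a)
  then have m: "1 \<le> m" by auto
  show ?case
  proof (cases "a = []")
    case True
    then show ?thesis using Cons.prems m by (simp add: Sa_single hatA_Q)
  next
    case False
    have "Sa (m # a) j (Qv p) = (\<Sum>l\<in>idx3. hatA m j l * Sa a l (Qv p))"
      using Sa_cons[OF m Cons.prems(3) False] .
    also have "\<dots> = (\<Sum>l\<in>idx3. hatA m j l * Qv (foldr cstep a p) l)"
      using Cons.IH[OF False] Cons.prems by (intro sum.cong) auto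
    also have "\<dots> = Qv (foldr cstep (m # a) p) j" using Cons.prems by (simp add: hatA_Q)
    finally show ?thesis .
  qed
qed

definition Na :: "nat list \<Rightarrow> nat \<Rightarrow> nat \<Rightarrow> real" where
  "Na a j l = Sa a j (\<lambda>l'. if l' = l then 1 else 0)"

lemma Sa_Na: "Sa a j h = (\<Sum>l\<in>idx3. Na a j l * h l)"
proof -
  have "(\<Sum>l\<in>idx3. Na a j l * h l) = (\<Sum>l\<in>idx3. \<Sum>u\<in>adm_words a. arr j (hd u) * ((if lt u = l then 1 else 0) * h l))"
    unfolding Na_def Sa_def by (simp add: sum_distrib_right mult.assoc)
  also have "\<dots> = (\<Sum>u\<in>adm_words a. arr j (hd u) * (\<Sum>l\<in>idx3. (if lt u = l then 1 else 0) * h l))"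
    by (subst sum.swap) (simp add: sum_distrib_left)
  also have "\<dots> = Sa a j h"
    unfolding Sa_def
  proof (intro sum.cong refl)
    fix u
    have "(\<Sum>l\<in>idx3. (if lt u = l then 1 else 0) * h l) = (\<Sum>l\<in>idx3. if lt u = l then h l else 0)"
      by (intro sum.cong) auto
    also have "\<dots> = h (lt u)" by (simp add: lt_def)
    finally show "arr j (hd u) * (\<Sum>l\<in>idx3. (if lt u = l then 1 else 0) * h l) = arr j (hd u) * h (lt u)"
      by simp
  qed
  finally show ?thesis by simp
qed

lemma Na_bounds:
  "a \<noteq> [] \<Longrightarrow> \<forall>m\<in>set a. 1 \<le> m \<Longrightarrow> nn idx3 (Na a) \<and> le idx3 (matpow idx3 (hatA 1) (length a)) (Na a)"
proof (induction a)
  case Nil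
  then show ?case by simp
next
  case (Cons m a)
  then have m: "1 \<le> m" by auto
  have nnH: "nn idx3 (hatA 1)" by (auto simp: nn_def hatA_def)
  have p1: "matpow idx3 (hatA 1) (Suc k) v w = matmul idx3 (hatA 1) (matpow idx3 (hatA 1) k) v w"
    if "v \<in> idx3" "w \<in> idx3" for v w k using that by (intro matpow_Suc_left) auto
  show ?case
  proof (cases "a = []")
    case True
    have N: "Na [m] j l = hatA m j l" if "j \<in> idx3" "l \<in> idx3" for j l
    proof -
      have "Na [m] j l = (\<Sum>l'\<in>idx3. hatA m j l' * (if l' = l then 1 else 0))"
        unfolding Na_def using Sa_single[OF m that(1)] .
      also have "\<dots> = (\<Sum>l'\<in>idx3. if l' = l then hatA m j l' else 0)" by (intro sum.cong) auto
      finally show ?thesis using that by simp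
    qed
    have "matpow idx3 (hatA 1) 1 v w = hatA 1 v w" if "v \<in> idx3" "w \<in> idx3" for v w
      using that by (simp add: matmul_id_left)
    then show ?thesis using True N nn_hatA[OF m] le_hatA[OF m] unfolding nn_def le_def by auto
  next
    case False
    have IH: "nn idx3 (Na a)" "le idx3 (matpow idx3 (hatA 1) (length a)) (Na a)"
      using Cons False by auto
    have N: "Na (m # a) j l = matmul idx3 (hatA m) (Na a) j l" if "j \<in> idx3" for j l
      unfolding Na_def matmul_def Sa_cons[OF m that False] ..
    have "le idx3 (matmul idx3 (hatA 1) (matpow idx3 (hatA 1) (length a))) (matmul idx3 (hatA m) (Na a))"
      using IH m nnH by (intro le_matmul nn_matpow le_hatA)
    moreover have "nn idx3 (matmul idx3 (hatA m) (Na a))" using IH m by (intro nn_matmul nn_hatA)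
    ultimately show ?thesis using N p1 unfolding le_def nn_def by auto
  qed
qed

lemma incA_arr: "incA a v w = arr (lt v) (hd w)"
  by (simp add: incA_def arr_def lt_def)

lemma matpow_incA:
  assumes "v \<in> adm_words a" "w \<in> adm_words a"
  shows "matpow (adm_words a) (incA a) (Suc n) v w = (\<Sum>j\<in>idx3. matpow idx3 (Na a) n (lt v) j * arr j (hd w))"
  using assms(2)
proof (induction n arbitrary: w)
  case 0
  have "matpow (adm_words a) (incA a) (Suc 0) v w = incA a v w"
    using assms(1) by (simp add: matmul_id_left finite_adm)
  also have "\<dots> = (\<Sum>j\<in>idx3. if lt v = j then arr j (hd w) else 0)" by (simp add: incA_arr lt_def)
  also have "\<dots> = (\<Sum>j\<in>idx3. matpow idx3 (Na a) 0 (lt v) j * arr j (hd w))"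
    by (intro sum.cong) (auto simp: matid_def)
  finally show ?case .
next
  case (Suc n)
  let ?P = "matpow idx3 (Na a) n"
  have "matpow (adm_words a) (incA a) (Suc (Suc n)) v w
      = (\<Sum>u\<in>adm_words a. matpow (adm_words a) (incA a) (Suc n) v u * incA a u w)"
    by (simp add: matmul_def)
  also have "\<dots> = (\<Sum>u\<in>adm_words a. (\<Sum>j\<in>idx3. ?P (lt v) j * arr j (hd u)) * arr (lt u) (hd w))"
  proof (intro sum.cong refl)
    fix u assume u: "u \<in> adm_words a"
    show "matpow (adm_words a) (incA a) (Suc n) v u * incA a u w
        = (\<Sum>j\<in>idx3. ?P (lt v) j * arr j (hd u)) * arr (lt u) (hd w)"
      unfolding Suc.IH[OF u] incA_arr[of a u w] ..
  qed
  also have "\<dots> = (\<Sum>j\<in>idx3. ?P (lt v) j * Sa a j (\<lambda>l. arr l (hd w)))"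
    unfolding Sa_def sum_distrib_right sum_distrib_left
    by (subst sum.swap) (simp add: mult.assoc)
  also have "\<dots> = (\<Sum>j\<in>idx3. \<Sum>l\<in>idx3. ?P (lt v) j * Na a j l * arr l (hd w))"
    unfolding Sa_Na sum_distrib_left by (simp add: mult.assoc)
  also have "\<dots> = (\<Sum>l\<in>idx3. matpow idx3 (Na a) (Suc n) (lt v) l * arr l (hd w))"
    by (subst sum.swap) (simp add: matmul_def sum_distrib_right)
  finally show ?case .
qed

lemma alph_arr: "e \<in> alphabet m \<Longrightarrow> \<exists>j\<in>idx3. arr j e = 1"
proof -
  assume "e \<in> alphabet m"
  then consider (a) i where "e = (T1, i, m)" "1 \<le> i" "i \<le> m + 1"
    | (b) "e = (T2, 1, m)" | (c) i where "e = (T3, i, m)" "1 \<le> i" "i \<le> m"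
    unfolding alphabet_def by blast
  then show ?thesis
  proof cases
    case a then show ?thesis by (intro bexI[of _ 1]) (auto simp: arr_def ity_def idx3_def)
  next
    case b then show ?thesis by (intro bexI[of _ 0]) (auto simp: arr_def ity_def idx3_def)
  next
    case c then show ?thesis by (intro bexI[of _ 1]) (auto simp: arr_def ity_def idx3_def)
  qed
qed

lemma primitive_incA:
  assumes a: "a \<noteq> []" and am: "\<forall>m\<in>set a. 1 \<le> m"
  shows "primitive (adm_words a) (incA a)"
proof -
  from Na_bounds[OF a am] have h: "nn idx3 (Na a)" "le idx3 (matpow idx3 (hatA 1) (length a)) (Na a)"
    by auto
  have pos5: "\<forall>i\<in>idx3. \<forall>j\<in>idx3. 0 < matpow idx3 (Na a) 5 i j"
    using a by (intro prim3[OF h]) (simp add: Suc_leI)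
  have nn5: "nn idx3 (matpow idx3 (Na a) 5)" using h(1) by (rule nn_matpow)
  have "0 < matpow (adm_words a) (incA a) 6 v w" if v: "v \<in> adm_words a" and w: "w \<in> adm_words a" for v w
  proof -
    have "w ! 0 \<in> alphabet (a ! 0)" using w a by (auto simp: adm_words_def)
    moreover have "hd w = w ! 0" using adm_nonnil[OF a w] by (simp add: hd_conv_nth)
    ultimately obtain j0 where j0: "j0 \<in> idx3" "arr j0 (hd w) = 1" using alph_arr by metis
    have "matpow (adm_words a) (incA a) (Suc 5) v w = (\<Sum>j\<in>idx3. matpow idx3 (Na a) 5 (lt v) j * arr j (hd w))"
      by (rule matpow_incA[OF v w])
    also have "\<dots> > 0"
    proof (rule sum_pos2[OF finite_idx3 j0(1)])
      show "0 < matpow idx3 (Na a) 5 (lt v) j0 * arr j0 (hd w)" using pos5 j0 by (simp add: lt_def)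
    next
      fix j assume "j \<in> idx3"
      then show "0 \<le> matpow idx3 (Na a) 5 (lt v) j * arr j (hd w)"
        using nn5 unfolding nn_def by (auto simp: arr_def lt_def)
    qed
    finally show ?thesis by (simp add: numeral_eq_Suc)
  qed
  then show ?thesis unfolding primitive_def
    by (intro conjI) (auto simp: incA_def intro!: exI[of _ 6])
qed

lemma Qv_pos: "snd p < fst p \<Longrightarrow> 0 < snd p \<Longrightarrow> 0 < Qv p i"
  by (auto simp: Qv_def)

lemma Qv_scale: "Qv (E * fst p, E * snd p) i = E * Qv p i"
  by (auto simp: Qv_def algebra_simps)

lemma PF_incA:
  assumes a: "a \<noteq> []" and am: "\<forall>m\<in>set a. 1 \<le> m"
  shows "PF_eigenvalue (adm_words a) (incA a) = Ef (Um a)"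
proof -
  obtain p where p: "app (Um a) p = (Ef (Um a) * fst p, Ef (Um a) * snd p)" "snd p < fst p" "0 < snd p"
    "0 < Ef (Um a)" using Um_eig[OF a am] by blast
  have SQ: "Sa a j (Qv p) = Ef (Um a) * Qv p j" if "j \<in> idx3" for j
    using Sa_Q[OF a am that, of p] p(1) by (simp add: app_Um[symmetric] Qv_scale)
  have ne: "adm_words a \<noteq> {}"
  proof
    assume "adm_words a = {}"
    then have "Sa a 0 (Qv p) = 0" by (simp add: Sa_def)
    moreover have "0 < Ef (Um a) * Qv p 0" using p Qv_pos by simp
    moreover have "Sa a 0 (Qv p) = Ef (Um a) * Qv p 0" using SQ[of 0] by (simp add: idx3_def)
    ultimately show False by linarith
  qed
  show ?thesis
  proof (rule PF_char[where u = "\<lambda>v. Qv p (lt v)"])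
    show "finite (adm_words a)" by (rule finite_adm)
    show "adm_words a \<noteq> {}" by (rule ne)
    show "nn (adm_words a) (incA a)" by (simp add: nn_def incA_def)
    show "\<forall>v\<in>adm_words a. 0 < Qv p (lt v)" using p Qv_pos by auto
    show "\<forall>v\<in>adm_words a. (\<Sum>w\<in>adm_words a. incA a v w * Qv p (lt w)) = Ef (Um a) * Qv p (lt v)"
    proof
      fix v assume "v \<in> adm_words a"
      have "(\<Sum>w\<in>adm_words a. incA a v w * Qv p (lt w)) = Sa a (lt v) (Qv p)"
        unfolding Sa_def incA_arr ..
      then show "(\<Sum>w\<in>adm_words a. incA a v w * Qv p (lt w)) = Ef (Um a) * Qv p (lt v)"
        using SQ[of "lt v"] by (simp add: lt_def)
    qed
  qed
qed

lemma PF_hatA: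
  assumes a: "a \<noteq> []" and am: "\<forall>m\<in>set a. 1 \<le> m"
  shows "PF_eigenvalue idx3 (hatA_word a) = Ef (Um a)"
proof -
  have a': "rev a \<noteq> []" "\<forall>m\<in>set (rev a). 1 \<le> m" using a am by auto
  obtain p where p: "app (Um (rev a)) p = (Ef (Um (rev a)) * fst p, Ef (Um (rev a)) * snd p)" "snd p < fst p" "0 < snd p"
    using Um_eig[OF a'] by blast
  have E: "Ef (Um (rev a)) = Ef (Um a)" by (simp add: Um_rev Ef_tr)
  show ?thesis
  proof (rule PF_char[where u = "Qv p"])
    show "finite idx3" by simp
    show "idx3 \<noteq> {}" by (simp add: idx3_def)
    show "nn idx3 (hatA_word a)" using hatA_word_bounds[OF am] by auto
    show "\<forall>v\<in>idx3. 0 < Qv p v" using p Qv_pos by auto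
    show "\<forall>v\<in>idx3. (\<Sum>w\<in>idx3. hatA_word a v w * Qv p w) = Ef (Um a) * Qv p v"
      using hatA_word_Q p(1) E by (simp add: foldl_cstep Qv_scale)
  qed
qed

section \<open>Continued fraction denominators\<close>

definition pr :: "real \<Rightarrow> nat \<Rightarrow> real \<times> real" where
  "pr x n = (real (q_den x n), if n = 0 then 0 else real (q_den x (n - 1)))"

lemma pr_step: "pr x (Suc n) = cstep (cf_digit x n) (pr x n)"
  by (cases n) (simp_all add: pr_def cstep_def)

lemma pp_digit: "x \<in> purely_periodic a \<Longrightarrow> cf_digit x n = a ! (n mod length a)"
  by (simp add: purely_periodic_def)

lemma pr_block:
  assumes x: "x \<in> purely_periodic a"
  shows "j \<le> length a \<Longrightarrow> pr x (length a * n + j) = foldl (\<lambda>p m. cstep m p) (pr x (length a * n)) (take j a)"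
proof (induction j)
  case 0
  then show ?case by simp
next
  case (Suc j)
  then have j: "j < length a" by simp
  have d: "cf_digit x (length a * n + j) = a ! j"
    using pp_digit[OF x] j by simp
  have "pr x (length a * n + Suc j) = cstep (a ! j) (pr x (length a * n + j))"
    using pr_step[of x "length a * n + j"] d by simp
  also have "\<dots> = foldl (\<lambda>p m. cstep m p) (pr x (length a * n)) (take (Suc j) a)"
    using Suc j by (simp add: take_Suc_conv_app_nth)
  finally show ?case .
qed

lemma pr_iter:
  assumes x: "x \<in> purely_periodic a"
  shows "pr x (length a * Suc n) = (app (Um (rev a)) ^^ n) (pr x (length a))"
proof (induction n)
  case 0
  then show ?case by simp
next
  case (Suc n)
  have "pr x (length a * Suc (Suc n)) = pr x (length a * Suc n + length a)"
    by (simp add: algebra_simps)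
  also have "\<dots> = app (Um (rev a)) (pr x (length a * Suc n))"
    using pr_block[OF x, of "length a" "Suc n"] by (simp add: foldl_cstep)
  finally show ?case using Suc by simp
qed

lemma app_scale: "app M (s * x, s * y) = (s * fst (app M (x, y)), s * snd (app M (x, y)))"
  by (cases M) (simp add: algebra_simps)

lemma iter_eig:
  assumes "app M p = (E * fst p, E * snd p)"
  shows "(app M ^^ n) (c * fst p, c * snd p) = (c * E ^ n * fst p, c * E ^ n * snd p)"
proof (induction n)
  case 0
  then show ?case by simp
next
  case (Suc n)
  have "(app M ^^ Suc n) (c * fst p, c * snd p) = app M ((c * E ^ n) * fst p, (c * E ^ n) * snd p)"
    using Suc by simp
  also have "\<dots> = ((c * E ^ n) * fst (app M (fst p, snd p)), (c * E ^ n) * snd (app M (fst p, snd p)))"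
    by (rule app_scale)
  also have "\<dots> = (c * E ^ Suc n * fst p, c * E ^ Suc n * snd p)"
    using assms by simp
  finally show ?case .
qed

lemma iter_mono:
  assumes "good M" "fst p \<le> fst p'" "snd p \<le> snd p'"
  shows "fst ((app M ^^ n) p) \<le> fst ((app M ^^ n) p') \<and> snd ((app M ^^ n) p) \<le> snd ((app M ^^ n) p')"
proof (induction n)
  case 0
  then show ?case using assms by simp
next
  case (Suc n)
  obtain g11 g12 g21 g22 where M: "M = M2 g11 g12 g21 g22" by (cases M)
  obtain x y where xy: "(app M ^^ n) p = (x, y)" by (cases "(app M ^^ n) p")
  obtain x' y' where xy': "(app M ^^ n) p' = (x', y')" by (cases "(app M ^^ n) p'")
  have h: "x \<le> x'" "y \<le> y'" using Suc xy xy' by auto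
  have g: "0 \<le> g11" "0 \<le> g12" "0 \<le> g21" "0 \<le> g22" using assms(1) M by auto
  have "g11 * x + g12 * y \<le> g11 * x' + g12 * y'"
    using h g by (intro add_mono mult_left_mono) auto
  moreover have "g21 * x + g22 * y \<le> g21 * x' + g22 * y'"
    using h g by (intro add_mono mult_left_mono) auto
  ultimately show ?case using xy xy' M by simp
qed

lemma q_pos:
  assumes x: "x \<in> purely_periodic a" and a: "a \<noteq> []" and am: "\<forall>m\<in>set a. 1 \<le> m"
  shows "1 \<le> q_den x n"
proof -
  have d: "1 \<le> cf_digit x k" for k
  proof -
    have "k mod length a < length a" using a by simp
    then have "a ! (k mod length a) \<in> set a" by (rule nth_mem)
    then show ?thesis using am pp_digit[OF x] by auto
  qed
  show ?thesis
  proof (induction n rule: less_induct)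
    case (less n)
    show ?case
    proof (cases n)
      case 0 then show ?thesis by simp
    next
      case (Suc k)
      show ?thesis
      proof (cases k)
        case 0 then show ?thesis using d[of 0] Suc by simp
      next
        case (Suc k')
        then have "1 \<le> q_den x k'" using less \<open>n = Suc k\<close> by simp
        then show ?thesis using Suc \<open>n = Suc k\<close> by (simp add: trans_le_add2)
      qed
    qed
  qed
qed

lemma q_asym:
  assumes a: "a \<noteq> []" and am: "\<forall>m\<in>set a. 1 \<le> m" and x: "x \<in> purely_periodic a"
  shows "\<exists>C>1. \<forall>n. Ef (Um a) ^ n / C \<le> real (q_den x (length a * n))
        \<and> real (q_den x (length a * n)) \<le> C * Ef (Um a) ^ n"
proof -
  define E where "E = Ef (Um a)"
  define T where "T = app (Um (rev a))"
  have a': "rev a \<noteq> []" "\<forall>m\<in>set (rev a). 1 \<le> m" using a am by auto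
  have EE: "Ef (Um (rev a)) = E" by (simp add: Um_rev Ef_tr E_def)
  obtain p where p: "T p = (E * fst p, E * snd p)" "snd p < fst p" "0 < snd p" "0 < E"
    using Um_eig[OF a'] unfolding EE T_def by blast
  have g: "good (Um (rev a))" using a'(2) by (rule good_Um)
  define k where "k = length a"
  have k: "1 \<le> k" using a by (simp add: k_def Suc_leI)
  define p0 where "p0 = pr x k"
  have p01: "1 \<le> fst p0" using q_pos[OF x a am] by (simp add: p0_def pr_def)
  have p02: "1 \<le> snd p0" using q_pos[OF x a am] k by (simp add: p0_def pr_def)
  define \<alpha> where "\<alpha> = fst p"
  define \<beta> where "\<beta> = snd p"
  have al: "0 < \<alpha>" and be: "0 < \<beta>" using p by (auto simp: \<alpha>_def \<beta>_def)
  define c1 where "c1 = min (fst p0 / \<alpha>) (snd p0 / \<beta>)"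
  define c2 where "c2 = max (fst p0 / \<alpha>) (snd p0 / \<beta>)"
  have c1p: "0 < c1" using al be p01 p02 by (simp add: c1_def)
  have c2p: "0 < c2" using al be p01 p02 by (simp add: c2_def less_max_iff_disj)
  have b1: "c1 * \<alpha> \<le> fst p0" "c1 * \<beta> \<le> snd p0"
  proof -
    have "c1 \<le> fst p0 / \<alpha>" "c1 \<le> snd p0 / \<beta>" by (auto simp: c1_def)
    then show "c1 * \<alpha> \<le> fst p0" "c1 * \<beta> \<le> snd p0" using al be by (auto simp: le_divide_eq)
  qed
  have b2: "fst p0 \<le> c2 * \<alpha>" "snd p0 \<le> c2 * \<beta>"
  proof -
    have "fst p0 / \<alpha> \<le> c2" "snd p0 / \<beta> \<le> c2" by (auto simp: c2_def)
    then show "fst p0 \<le> c2 * \<alpha>" "snd p0 \<le> c2 * \<beta>" using al be by (auto simp: divide_le_eq)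
  qed
  have bound: "c1 * E ^ n * \<alpha> \<le> real (q_den x (k * Suc n)) \<and> real (q_den x (k * Suc n)) \<le> c2 * E ^ n * \<alpha>" for n
  proof -
    have "fst (pr x (k * Suc n)) = fst ((T ^^ n) p0)"
      using pr_iter[OF x, of n] unfolding T_def p0_def k_def by (simp only:)
    moreover have "fst (pr x (k * Suc n)) = real (q_den x (k * Suc n))" by (simp add: pr_def)
    ultimately have eq: "real (q_den x (k * Suc n)) = fst ((T ^^ n) p0)" by simp
    have m1: "fst ((T ^^ n) (c1 * fst p, c1 * snd p)) \<le> fst ((T ^^ n) p0)"
      using iter_mono[OF g, of "(c1 * fst p, c1 * snd p)" p0 n] b1 unfolding T_def \<alpha>_def \<beta>_def by simp
    have m2: "fst ((T ^^ n) p0) \<le> fst ((T ^^ n) (c2 * fst p, c2 * snd p))"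
      using iter_mono[OF g, of p0 "(c2 * fst p, c2 * snd p)" n] b2 unfolding T_def \<alpha>_def \<beta>_def by simp
    have e1: "(T ^^ n) (c1 * fst p, c1 * snd p) = (c1 * E ^ n * fst p, c1 * E ^ n * snd p)"
      using p(1) unfolding T_def by (rule iter_eig)
    have e2: "(T ^^ n) (c2 * fst p, c2 * snd p) = (c2 * E ^ n * fst p, c2 * E ^ n * snd p)"
      using p(1) unfolding T_def by (rule iter_eig)
    show ?thesis using eq m1 m2 e1 e2 by (simp add: \<alpha>_def)
  qed
  define C where "C = 2 + E / (c1 * \<alpha>) + c2 * \<alpha> / E"
  have C1: "E / (c1 * \<alpha>) \<le> C" and C2: "c2 * \<alpha> / E \<le> C" and C3: "2 \<le> C"
    using p(4) c1p c2p al by (auto simp: C_def)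
  have lowC: "E \<le> C * (c1 * \<alpha>)" using C1 c1p al by (simp add: divide_le_eq)
  have upC: "c2 * \<alpha> \<le> C * E" using C2 p(4) by (simp add: divide_le_eq)
  have Cp: "0 < C" using C3 by simp
  have "\<forall>n. E ^ n / C \<le> real (q_den x (k * n)) \<and> real (q_den x (k * n)) \<le> C * E ^ n"
  proof
    fix n
    show "E ^ n / C \<le> real (q_den x (k * n)) \<and> real (q_den x (k * n)) \<le> C * E ^ n"
    proof (cases n)
      case 0
      then show ?thesis using C3 by (simp add: divide_le_eq)
    next
      case (Suc n')
      have En: "0 \<le> E ^ n'" using p(4) by simp
      have "E ^ n / C = (E / C) * E ^ n'" using Suc by simp
      also have "\<dots> \<le> (c1 * \<alpha>) * E ^ n'"
        using lowC Cp En by (intro mult_right_mono) (auto simp: divide_le_eq mult.commute)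
      also have "\<dots> \<le> real (q_den x (k * n))" using bound[of n'] Suc by (simp add: algebra_simps)
      finally have L: "E ^ n / C \<le> real (q_den x (k * n))" .
      have "real (q_den x (k * n)) \<le> (c2 * \<alpha>) * E ^ n'" using bound[of n'] Suc by (simp add: algebra_simps)
      also have "\<dots> \<le> (C * E) * E ^ n'" using upC En by (rule mult_right_mono)
      also have "\<dots> = C * E ^ n" using Suc by (simp add: algebra_simps)
      finally show ?thesis using L by simp
    qed
  qed
  then show ?thesis using C3 unfolding E_def k_def by (intro exI[of _ C]) auto
qed

theorem lemma4p1:
  fixes a :: "nat list"
  assumes "a \<noteq> []" and "\<forall>m\<in>set a. 1 \<le> m"
  shows "primitive idx3 (hatA_word a) \<and> primitive (adm_words a) (incA a)
    \<and> PF_eigenvalue idx3 (hatA_word a) = PF_eigenvalue (adm_words a) (incA a)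
    \<and> (\<forall>x\<in>purely_periodic a. \<exists>C>1. \<forall>n.
          PF_eigenvalue (adm_words a) (incA a) ^ n / C \<le> real (q_den x (length a * n))
        \<and> real (q_den x (length a * n)) \<le> C * PF_eigenvalue (adm_words a) (incA a) ^ n)"
  using primitive_hatA_word[OF assms] primitive_incA[OF assms] PF_incA[OF assms] PF_hatA[OF assms]
    q_asym[OF assms] by simp

end
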